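(* Let $d\ge 1$ and let $\mu$ be the probability measure on $\mathbb{R}^d$ given by $\mathrm{d}\mu(x)=\rho(|x|)\,\mathrm{d}x$, where $\rho:[0,\infty)\to(0,\infty)$ is continuous. Let $A\subset\mathbb{R}^d$ be a bounded closed convex set containing the origin $0$. Then for every closed ball $B$ centered at the origin, $$\mu(A\cap B)\ge \mu(A)\,\mu(B).$$
   Context: $|x|$ denotes the Euclidean norm on $\mathbb{R}^d$. The set $A$ is not assumed to be symmetric. In particular the conclusion applies to the standard Gaussian measure $\gamma_d$. *)

theory Defs
  imports "HOL-Probability.Probability"
begin

end

theory Submission imports Defs begin

lemma measure_eqI_atMost_real:
  fixes M N :: "real measure"
  assumes sets: "sets M = sets borel" "sets N = sets borel"
  assumes fin: "\<And>x. emeasure M {..x} < \<infinity>"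
  assumes eq: "\<And>x. emeasure M {..x} = emeasure N {..x}"
  shows "M = N"
proof (rule measure_eqI_generator_eq_countable[where E="range atMost" and \<Omega>=UNIV and A="range (\<lambda>n::nat. {..real n})"])
  show "Int_stable (range atMost :: real set set)"
    by (auto simp: Int_stable_def)
  show "sets M = sigma_sets UNIV (range atMost)" "sets N = sigma_sets UNIV (range atMost)"
    unfolding sets borel_eq_atMost by auto
  show "\<Union> (range (\<lambda>n::nat. {..real n})) = UNIV"
    by (auto intro: real_arch_simple)
qed (use fin eq in \<open>auto simp: less_top\<close>)

lemma lborel_scale_cone:
  fixes C :: "'a::euclidean_space set"
  assumes C: "C \<in> sets borel" and cone: "\<And>x c. c > 0 \<Longrightarrow> (c *\<^sub>R x \<in> C) = (x \<in> C)"
    and t: "t > 0"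
  shows "emeasure lborel (C \<inter> cball 0 t) = ennreal (t ^ DIM('a)) * emeasure lborel (C \<inter> cball 0 1)"
proof -
  have "emeasure lborel (C \<inter> cball 0 t) = emeasure (density (distr lborel borel (\<lambda>x. 0 + t *\<^sub>R x)) (\<lambda>_. \<bar>t\<bar>^DIM('a))) (C \<inter> cball 0 t)"
  proof -
    have L: "(lborel::'a measure) = density (distr lborel borel (\<lambda>x. 0 + t *\<^sub>R x)) (\<lambda>_. \<bar>t\<bar>^DIM('a))"
      using lborel_affine[of t "0::'a"] t by simp
    show ?thesis by (simp only: L[symmetric])
  qed
  also have "\<dots> = ennreal (t ^ DIM('a)) * emeasure (distr lborel borel (\<lambda>x. t *\<^sub>R x)) (C \<inter> cball 0 t)"
    using C t by (simp add: emeasure_density nn_integral_cmult_indicator)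
  also have "emeasure (distr lborel borel (\<lambda>x. t *\<^sub>R x)) (C \<inter> cball 0 t) = emeasure lborel ((\<lambda>x. t *\<^sub>R x) -` (C \<inter> cball 0 t))"
    using C by (subst emeasure_distr) auto
  also have "(\<lambda>x. t *\<^sub>R x) -` (C \<inter> cball 0 t) = C \<inter> cball 0 1"
    using t cone by (auto simp: mem_cball)
  finally show ?thesis .
qed

lemma cone_radial:
  fixes C :: "'a::euclidean_space set"
  assumes C: "C \<in> sets borel" and cone: "\<And>x c. c > 0 \<Longrightarrow> (c *\<^sub>R x \<in> C) = (x \<in> C)"
  shows "\<exists>\<kappa>. \<forall>G \<in> borel_measurable borel.
     (\<integral>\<^sup>+x. indicator C x * G (norm x) \<partial>lborel) = \<kappa> * (\<integral>\<^sup>+x. G (norm x) \<partial>(lborel::'a measure))"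
proof -
  define V where "V = unit_ball_vol (real DIM('a))"
  define mC where "mC = measure lborel (C \<inter> cball (0::'a) 1)"
  define \<kappa> where "\<kappa> = ennreal (mC / V)"
  have V: "V > 0" unfolding V_def by simp
  have fin1: "emeasure lborel (C \<inter> cball (0::'a) 1) = ennreal mC"
    unfolding mC_def
  proof (rule emeasure_eq_ennreal_measure)
    have "emeasure lborel (C \<inter> cball (0::'a) 1) \<le> emeasure lborel (cball (0::'a) 1)"
      by (rule emeasure_mono) auto
    then show "emeasure lborel (C \<inter> cball (0::'a) 1) \<noteq> \<top>"
      using emeasure_lborel_cball_finite[of "0::'a" 1] by (auto simp: top_unique)
  qed
  define N1 where "N1 = distr (density lborel (indicator C)) borel (norm :: 'a \<Rightarrow> real)"
  define N2 where "N2 = density (distr lborel borel (norm :: 'a \<Rightarrow> real)) (\<lambda>_. \<kappa>)"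
  have pre: "(norm :: 'a \<Rightarrow> real) -` {..x} = cball 0 x" for x
    by (auto simp: mem_cball)
  have N1x: "emeasure N1 {..x} = emeasure lborel (C \<inter> cball 0 x)" for x
    unfolding N1_def using C
    by (simp add: emeasure_distr emeasure_restricted pre)
  have N2x: "emeasure N2 {..x} = \<kappa> * emeasure lborel (cball (0::'a) x)" for x
    unfolding N2_def using C
    by (simp add: emeasure_density emeasure_distr nn_integral_cmult_indicator pre)
  have N12: "N1 = N2"
  proof (rule measure_eqI_atMost_real)
    show "sets N1 = sets borel" "sets N2 = sets borel" unfolding N1_def N2_def by auto
    show "emeasure N1 {..x} < \<infinity>" for x
    proof -
      have "emeasure lborel (C \<inter> cball (0::'a) x) \<le> emeasure lborel (cball (0::'a) x)"
        by (rule emeasure_mono) auto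
      then show ?thesis unfolding N1x
        using emeasure_lborel_cball_finite[of "0::'a" x] by (rule order.strict_trans1)
    qed
    show "emeasure N1 {..x} = emeasure N2 {..x}" for x
    proof (cases "x > 0")
      case True
      have "emeasure N1 {..x} = ennreal (x ^ DIM('a)) * ennreal mC"
        unfolding N1x using lborel_scale_cone[OF C cone True] fin1 by simp
      also have "\<dots> = \<kappa> * ennreal (V * x ^ DIM('a))"
        unfolding \<kappa>_def using V True
        by (simp add: ennreal_mult'[symmetric] mC_def)
      also have "\<dots> = emeasure N2 {..x}"
        unfolding N2x V_def using True by (simp add: emeasure_cball)
      finally show ?thesis .
    next
      case False
      have z: "emeasure lborel (cball (0::'a) x) = 0"
      proof -
        have "cball (0::'a) x \<subseteq> {0}" using False by (auto simp: mem_cball) (metis norm_le_zero_iff order.trans not_less)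
        then show ?thesis
          by (meson countable_empty countable_insert countable_subset emeasure_lborel_countable)
      qed
      have z2: "emeasure lborel (C \<inter> cball (0::'a) x) = 0"
      proof -
        have "emeasure lborel (C \<inter> cball (0::'a) x) \<le> emeasure lborel (cball (0::'a) x)"
          by (rule emeasure_mono) auto
        then show ?thesis using z by simp
      qed
      show ?thesis unfolding N1x N2x z z2 by simp
    qed
  qed
  show ?thesis
  proof (intro exI ballI)
    fix G :: "real \<Rightarrow> ennreal" assume G: "G \<in> borel_measurable borel"
    have "(\<integral>\<^sup>+x. indicator C x * G (norm x) \<partial>lborel) = (\<integral>\<^sup>+x. G (norm x) \<partial>density lborel (indicator C))"
      using C G by (subst nn_integral_density) auto
    also have "\<dots> = (\<integral>\<^sup>+s. G s \<partial>N1)"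
      unfolding N1_def using G by (subst nn_integral_distr) auto
    also have "\<dots> = (\<integral>\<^sup>+s. G s \<partial>N2)" by (simp add: N12)
    also have "\<dots> = (\<integral>\<^sup>+s. \<kappa> * G s \<partial>distr lborel borel (norm :: 'a \<Rightarrow> real))"
      unfolding N2_def using G by (subst nn_integral_density) auto
    also have "\<dots> = \<kappa> * (\<integral>\<^sup>+s. G s \<partial>distr lborel borel (norm :: 'a \<Rightarrow> real))"
      using G by (subst nn_integral_cmult) auto
    also have "\<dots> = \<kappa> * (\<integral>\<^sup>+x. G (norm x) \<partial>(lborel::'a measure))"
      using G by (subst nn_integral_distr) auto
    finally show "(\<integral>\<^sup>+x. indicator C x * G (norm x) \<partial>lborel) = \<kappa> * (\<integral>\<^sup>+x. G (norm x) \<partial>(lborel::'a measure))" .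
  qed
qed

lemma convex_scale0:
  assumes "convex A" "0 \<in> A" "y \<in> A" "0 \<le> \<theta>" "\<theta> \<le> 1"
  shows "\<theta> *\<^sub>R y \<in> A"
  using convexD[OF assms(1) assms(3) assms(2), of \<theta> "1 - \<theta>"] assms(4,5) by simp

theorem theorem1p1:
  fixes \<rho> :: "real \<Rightarrow> real"
    and \<mu> :: "'a::euclidean_space measure"
    and A :: "'a set"
    and r :: real
  assumes rho_cont: "continuous_on {0..} \<rho>"
    and rho_pos: "\<And>t. t \<ge> 0 \<Longrightarrow> \<rho> t > 0"
    and mu_def: "\<mu> = density lborel (\<lambda>x. ennreal (\<rho> (norm x)))"
    and prob: "prob_space \<mu>"
    and A_bounded: "bounded A" and A_closed: "closed A" and A_convex: "convex A"
    and A_0: "0 \<in> A"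
    and r_pos: "0 < r"
  shows "measure \<mu> (A \<inter> cball 0 r) \<ge> measure \<mu> A * measure \<mu> (cball 0 r)"
proof -
  interpret P: prob_space \<mu> by (rule prob)
  define C where "C = {x::'a. (r / norm x) *\<^sub>R x \<in> A}"
  define B where "B = cball (0::'a) r"
  have Ab: "A \<in> sets borel" using A_closed by simp
  have fm: "(\<lambda>x::'a. (r / norm x) *\<^sub>R x) \<in> borel_measurable borel" by measurable
  have Cb: "C \<in> sets borel"
  proof -
    have "(\<lambda>x::'a. (r / norm x) *\<^sub>R x) -` A \<inter> space borel \<in> sets borel"
      by (rule measurable_sets[OF fm Ab])
    then show ?thesis unfolding C_def by (simp add: vimage_def)
  qed
  have cone: "(c *\<^sub>R x \<in> C) = (x \<in> C)" if "c > 0" for x :: 'a and c :: real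
  proof (cases "x = 0")
    case False
    have eq: "(r / norm (c *\<^sub>R x)) *\<^sub>R (c *\<^sub>R x) = (r / norm x) *\<^sub>R x"
      using that False by (simp add: field_simps)
    show ?thesis by (simp only: C_def mem_Collect_eq eq)
  qed simp
  obtain \<kappa> where kap: "\<And>G. G \<in> borel_measurable borel \<Longrightarrow>
     (\<integral>\<^sup>+x. indicator C x * G (norm x) \<partial>lborel) = \<kappa> * (\<integral>\<^sup>+x. G (norm x) \<partial>(lborel::'a measure))"
    using cone_radial[OF Cb cone] by blast
  have rc: "continuous_on UNIV (\<lambda>s::real. \<rho> (abs s))"
    by (rule continuous_on_compose2[OF rho_cont continuous_on_rabs[OF continuous_on_id]]) auto
  have rm: "(\<lambda>s::real. \<rho> (abs s)) \<in> borel_measurable borel"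
    using rc by (rule borel_measurable_continuous_onI)
  have fmeas: "(\<lambda>x::'a. ennreal (\<rho> (norm x))) \<in> borel_measurable borel"
  proof -
    have "(\<lambda>x::'a. \<rho> (abs (norm x))) \<in> borel_measurable borel"
      using rm by measurable
    then show ?thesis by simp
  qed
  have key: "emeasure \<mu> (C \<inter> norm -` E) = \<kappa> * emeasure \<mu> (norm -` E)" if E: "E \<in> sets borel" for E :: "real set"
  proof -
    define G where "G s = ennreal (\<rho> (abs s)) * indicator E s" for s
    have Gm: "G \<in> borel_measurable borel" unfolding G_def using rm E by measurable
    have nE: "(norm :: 'a \<Rightarrow> real) -` E \<in> sets borel"
      using measurable_sets[OF borel_measurable_norm E] by simp
    have "emeasure \<mu> (C \<inter> norm -` E) = (\<integral>\<^sup>+x. ennreal (\<rho> (norm x)) * indicator (C \<inter> norm -` E) x \<partial>lborel)"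
      unfolding mu_def using fmeas Cb nE by (simp add: emeasure_density)
    also have "\<dots> = (\<integral>\<^sup>+x. indicator C x * G (norm x) \<partial>lborel)"
      by (intro nn_integral_cong) (simp add: G_def indicator_def)
    also have "\<dots> = \<kappa> * (\<integral>\<^sup>+x. G (norm x) \<partial>(lborel::'a measure))" by (rule kap[OF Gm])
    also have "(\<integral>\<^sup>+x. G (norm x) \<partial>(lborel::'a measure)) = (\<integral>\<^sup>+x. ennreal (\<rho> (norm x)) * indicator ((norm :: 'a \<Rightarrow> real) -` E) x \<partial>lborel)"
      by (intro nn_integral_cong) (simp add: G_def indicator_def)
    also have "\<dots> = emeasure \<mu> (norm -` E)"
      unfolding mu_def using fmeas nE by (simp add: emeasure_density)
    finally show ?thesis .
  qed
  have sp: "space \<mu> = UNIV" unfolding mu_def by simp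
  have sets_mu: "sets \<mu> = sets borel" unfolding mu_def by simp
  have k1: "emeasure \<mu> C = \<kappa>"
    using key[of UNIV] P.emeasure_space_1 sp by simp
  have Bpre: "(norm :: 'a \<Rightarrow> real) -` {..r} = B" unfolding B_def by (auto simp: mem_cball)
  have k2: "emeasure \<mu> (C \<inter> B) = \<kappa> * emeasure \<mu> B"
    using key[of "{..r}"] Bpre by simp
  have CB: "measure \<mu> (C \<inter> B) = measure \<mu> C * measure \<mu> B"
  proof -
    have "ennreal (measure \<mu> (C \<inter> B)) = ennreal (measure \<mu> C) * ennreal (measure \<mu> B)"
      using k1 k2 by (simp add: P.emeasure_eq_measure)
    then have "ennreal (measure \<mu> (C \<inter> B)) = ennreal (measure \<mu> C * measure \<mu> B)"
      by (simp add: ennreal_mult')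
    then show ?thesis by (simp add: ennreal_inj)
  qed
  have sub1: "C \<inter> B \<subseteq> A"
  proof
    fix x assume x: "x \<in> C \<inter> B"
    show "x \<in> A"
    proof (cases "x = 0")
      case True then show ?thesis using A_0 by simp
    next
      case False
      have y: "(r / norm x) *\<^sub>R x \<in> A" using x unfolding C_def by simp
      have nx: "norm x \<le> r" using x unfolding B_def by (simp add: mem_cball)
      have "(norm x / r) *\<^sub>R ((r / norm x) *\<^sub>R x) \<in> A"
        by (rule convex_scale0[OF A_convex A_0 y]) (use nx r_pos in auto)
      moreover have "(norm x / r) *\<^sub>R ((r / norm x) *\<^sub>R x) = x"
        using False r_pos by simp
      ultimately show ?thesis by simp
    qed
  qed
  have sub2: "A - B \<subseteq> C"
  proof
    fix x assume x: "x \<in> A - B"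
    then have nx: "norm x > r" unfolding B_def by (simp add: mem_cball)
    have "(r / norm x) *\<^sub>R x \<in> A"
      using convex_scale0[OF A_convex A_0, of x "r / norm x"] x nx r_pos by (simp add: divide_le_eq_1)
    then show "x \<in> C" unfolding C_def by simp
  qed
  have Bb: "B \<in> sets borel" unfolding B_def by simp
  define a1 where "a1 = measure \<mu> (A \<inter> B)"
  define a2 where "a2 = measure \<mu> (A - B)"
  define c where "c = measure \<mu> C"
  define b where "b = measure \<mu> B"
  have hA: "measure \<mu> A = a1 + a2"
    unfolding a1_def a2_def using P.finite_measure_Diff'[of A B] Ab Bb sets_mu by simp
  have h2: "a2 \<le> c - c * b"
  proof -
    have "a2 \<le> measure \<mu> (C - B)"
      unfolding a2_def using sub2 Cb Bb sets_mu by (intro P.finite_measure_mono) auto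
    also have "\<dots> = c - c * b"
      using P.finite_measure_Diff'[of C B] Cb Bb sets_mu CB unfolding c_def b_def by simp
    finally show ?thesis .
  qed
  have h1: "c * b \<le> a1"
  proof -
    have "measure \<mu> (C \<inter> B) \<le> a1"
      unfolding a1_def using sub1 Ab Bb sets_mu by (intro P.finite_measure_mono) auto
    then show ?thesis using CB unfolding c_def b_def by simp
  qed
  have b0: "0 \<le> b" and b1: "b \<le> 1" unfolding b_def by auto
  have "a2 * b \<le> (c - c * b) * b" using h2 b0 by (rule mult_right_mono)
  moreover have "(c * b) * (1 - b) \<le> a1 * (1 - b)" using h1 b1 by (intro mult_right_mono) auto
  ultimately have "(a1 + a2) * b \<le> a1" by (simp add: algebra_simps)
  then show ?thesis using hA unfolding a1_def b_def B_def by simp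
qed

end
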